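(* Consider the discrete-time $Geo^X/G_r^{(a,b)}/1$ queue with single ($\delta=0$) or multiple ($\delta=1$) vacations described in the context, with $\rho<1$. Let $P^+(x)=\sum_{n\ge0}p^+_nx^n$ be the pgf of the queue length at service completion epochs. Then for all complex $x$ with $|x|\le1$ and $x^b\ne K^{(b)}(x)$, $$P^+(x)=\frac{\begin{aligned}&\sum_{n=0}^{a-1}p^+_nx^n\{H(x)-1\}K^{(b)}(x)+\sum_{n=0}^{a-1}Q^+_n\Big[x^n\{\delta H(x)-1\}K^{(b)}(x)\\&\quad+x^b(1-\delta)\sum_{j=n}^{a-1}e_{j,n}\Big(\sum_{i=a}^bg_{i-j}K^{(i)}(x)+\sum_{i=b+1-j}^\infty g_ix^{i+j-b}K^{(b)}(x)\Big)\Big]\\&\quad+\sum_{n=a}^{b-1}(p^+_n+Q^+_n)\{x^bK^{(n)}(x)-x^nK^{(b)}(x)\}\end{aligned}}{x^b-K^{(b)}(x)}.$$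
   Context: Time is slotted. Fix integers $1\le a\le b$, $\lambda\in(0,1)$, $\bar\lambda=1-\lambda$, and a group-size distribution $(g_m)_{m\ge1}$ with finite mean $\bar g$ and pgf $G(z)=\sum_{m\ge1}g_mz^m$; $g_m=0$ for $m\le0$. In each slot a group arrives with probability $\lambda$, with size distribution $(g_m)$. Service follows the $(a,b)$ bulk rule (start only if at least $a$ wait; take all if $a\le r\le b$ wait, exactly $b$ if more than $b$ wait). A batch of size $r$ ($a\le r\le b$) has service-time pmf $s_r(n)$, $n\ge1$, pgf $S_r^*(z)$, mean $s_r$, $\mu_b=1/s_b$. Vacation times have pmf $v_n$, $n\ge1$, pgf $V^*(z)$, finite mean. $\delta=0$: single vacation (server stays dormant after a vacation until $a$ wait); $\delta=1$: multiple vacations. $\rho=\lambda\bar g/(b\mu_b)<1$. Stationary probabilities $p_{n,0}$ ($0\le n\le a-1$, dormant), $p_{n,r}(u)$ ($n\ge0$ waiting, batch size $a\le r\le b$ in service, remaining service $u\ge1$), $Q_n(u)$ ($n\ge0$ waiting, on vacation, remaining vacation $u\ge1$) satisfy: (E1) $p_{0,0}=(1-\delta)[\bar\lambda p_{0,0}+\bar\lambda Q_0(1)]$; (E2) $p_{n,0}=(1-\delta)[\bar\lambda p_{n,0}+\lambda\sum_{i=1}^ng_ip_{n-i,0}+\bar\lambda Q_n(1)+\lambda\sum_{i=1}^ng_iQ_{n-i}(1)]$, $1\le n\le a-1$; (E3) $p_{0,r}(u)=\bar\lambda p_{0,r}(u+1)+s_r(u)\big[\sum_{m=a}^b(\bar\lambda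 p_{r,m}(1)+\lambda\sum_{i=1}^rg_ip_{r-i,m}(1))+\bar\lambda Q_r(1)+\lambda\sum_{i=1}^rg_iQ_{r-i}(1)+(1-\delta)\lambda\sum_{i=0}^{a-1}g_{r-i}p_{i,0}\big]$, $a\le r\le b$; (E4) $p_{n,r}(u)=\bar\lambda p_{n,r}(u+1)+\lambda\sum_{i=1}^ng_ip_{n-i,r}(u+1)$, $n\ge1$, $a\le r\le b-1$; (E5) $p_{n,b}(u)=\bar\lambda p_{n,b}(u+1)+\lambda\sum_{i=1}^ng_ip_{n-i,b}(u+1)+s_b(u)\big[\sum_{m=a}^b(\bar\lambda p_{n+b,m}(1)+\lambda\sum_{i=1}^{n+b}g_ip_{n+b-i,m}(1))+\bar\lambda Q_{n+b}(1)+\lambda\sum_{i=1}^{n+b}g_iQ_{n+b-i}(1)+(1-\delta)\lambda\sum_{i=0}^{a-1}g_{n+b-i}p_{i,0}\big]$, $n\ge1$; (E6) $Q_0(u)=\bar\lambda Q_0(u+1)+\bar\lambda(\sum_{m=a}^bp_{0,m}(1)+\delta Q_0(1))v_u$; (E7) $Q_n(u)=\bar\lambda Q_n(u+1)+\lambda\sum_{i=1}^ng_iQ_{n-i}(u+1)+v_u\big[\bar\lambda(\sum_{m=a}^bp_{n,m}(1)+\delta Q_n(1))+\lambda\sum_{i=1}^ng_i(\sum_{m=a}^bp_{n-i,m}(1)+\delta Q_{n-i}(1))\big]$, $1\le n\le a-1$; (E8) $Q_n(u)=\bar\lambda Q_n(u+1)+\lambda\sum_{i=1}^ng_iQ_{n-i}(u+1)$,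 $n\ge a$; (N) $(1-\delta)\sum_{n=0}^{a-1}p_{n,0}+\sum_{n,r,u}p_{n,r}(u)+\sum_{n,u}Q_n(u)=1$. With $\tau=\sum_{m\ge0}\sum_{r=a}^bp_{m,r}(1)+\sum_{m\ge0}Q_m(1)$: $p^+_{0,r}=\tau^{-1}\bar\lambda p_{0,r}(1)$, $p^+_{n,r}=\tau^{-1}(\bar\lambda p_{n,r}(1)+\lambda\sum_{i=1}^ng_ip_{n-i,r}(1))$ ($n\ge1$); $p^+_n=\sum_{r=a}^bp^+_{n,r}$; $Q^+_0=\tau^{-1}\bar\lambda Q_0(1)$, $Q^+_n=\tau^{-1}(\bar\lambda Q_n(1)+\lambda\sum_{i=1}^ng_iQ_{n-i}(1))$ ($n\ge1$). $K^{(r)}(x)=S_r^*(\bar\lambda+\lambda G(x))$, $H(x)=V^*(\bar\lambda+\lambda G(x))$. $e_{n,i}$ ($0\le i\le n$): $e_{n,n}=1$, $e_{n,n-1}=g_1$, $e_{n,i}=\sum_{j=i+1}^{n-1}e_{n,j}g_{j-i}+g_{n-i}$ for $0\le i\le n-2$. *)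

theory Defs
  imports "HOL-Analysis.Analysis"
begin

definition pgf :: "(nat \<Rightarrow> real) \<Rightarrow> complex \<Rightarrow> complex" where
  "pgf f z = (\<Sum>n. complex_of_real (f n) * z ^ n)"

text \<open>K^(r)(x) = S_r^*(lambdabar + lambda G(x)); s r is the service-time pmf of a batch of size r.\<close>
definition Kfun :: "real \<Rightarrow> (nat \<Rightarrow> real) \<Rightarrow> (nat \<Rightarrow> nat \<Rightarrow> real) \<Rightarrow> nat \<Rightarrow> complex \<Rightarrow> complex" where
  "Kfun lam g s r x = pgf (s r) (complex_of_real (1 - lam) + complex_of_real lam * pgf g x)"

definition Hfun :: "real \<Rightarrow> (nat \<Rightarrow> real) \<Rightarrow> (nat \<Rightarrow> real) \<Rightarrow> complex \<Rightarrow> complex" where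
  "Hfun lam g v x = pgf v (complex_of_real (1 - lam) + complex_of_real lam * pgf g x)"

function ecoef :: "(nat \<Rightarrow> real) \<Rightarrow> nat \<Rightarrow> nat \<Rightarrow> real" where
  "ecoef g n i =
     (if i = n then 1
      else if i + 1 = n then g 1
      else if i < n then (\<Sum>j\<in>{i+1..n-1}. ecoef g n j * g (j - i)) + g (n - i)
      else 0)"
  by auto
termination
  by (relation "Wellfounded.measure (\<lambda>(g, n, i). n - i)") auto

definition tauc :: "nat \<Rightarrow> nat \<Rightarrow> (nat \<Rightarrow> nat \<Rightarrow> nat \<Rightarrow> real) \<Rightarrow> (nat \<Rightarrow> nat \<Rightarrow> real) \<Rightarrow> real" where
  "tauc a b p Q = (\<Sum>m. \<Sum>r=a..b. p m r 1) + (\<Sum>m. Q m 1)"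

definition pplus_r :: "real \<Rightarrow> (nat \<Rightarrow> real) \<Rightarrow> nat \<Rightarrow> nat \<Rightarrow> (nat \<Rightarrow> nat \<Rightarrow> nat \<Rightarrow> real) \<Rightarrow> (nat \<Rightarrow> nat \<Rightarrow> real) \<Rightarrow> nat \<Rightarrow> nat \<Rightarrow> real" where
  "pplus_r lam g a b p Q n r =
     (if n = 0 then (1 - lam) * p 0 r 1
      else (1 - lam) * p n r 1 + lam * (\<Sum>i=1..n. g i * p (n - i) r 1)) / tauc a b p Q"

definition pplus :: "real \<Rightarrow> (nat \<Rightarrow> real) \<Rightarrow> nat \<Rightarrow> nat \<Rightarrow> (nat \<Rightarrow> nat \<Rightarrow> nat \<Rightarrow> real) \<Rightarrow> (nat \<Rightarrow> nat \<Rightarrow> real) \<Rightarrow> nat \<Rightarrow> real" where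
  "pplus lam g a b p Q n = (\<Sum>r=a..b. pplus_r lam g a b p Q n r)"

definition Qplus :: "real \<Rightarrow> (nat \<Rightarrow> real) \<Rightarrow> nat \<Rightarrow> nat \<Rightarrow> (nat \<Rightarrow> nat \<Rightarrow> nat \<Rightarrow> real) \<Rightarrow> (nat \<Rightarrow> nat \<Rightarrow> real) \<Rightarrow> nat \<Rightarrow> real" where
  "Qplus lam g a b p Q n =
     (if n = 0 then (1 - lam) * Q 0 1
      else (1 - lam) * Q n 1 + lam * (\<Sum>i=1..n. g i * Q (n - i) 1)) / tauc a b p Q"

end

theory Submission
  imports Defs
begin


definition cv :: "real \<Rightarrow> (nat \<Rightarrow> real) \<Rightarrow> (nat \<Rightarrow> real) \<Rightarrow> nat \<Rightarrow> real" where
  "cv lam g c n = (1 - lam) * c n + lam * (\<Sum>i=1..n. g i * c (n - i))"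

definition al :: "real \<Rightarrow> (nat \<Rightarrow> real) \<Rightarrow> nat \<Rightarrow> real" where
  "al lam g n = (if n = 0 then 1 - lam else lam * g n)"

definition Aval :: "real \<Rightarrow> (nat \<Rightarrow> real) \<Rightarrow> complex \<Rightarrow> complex" where
  "Aval lam g x = complex_of_real (1 - lam) + complex_of_real lam * pgf g x"

lemma cv_alt:
  assumes "g 0 = 0"
  shows "cv lam g c n = (\<Sum>i\<le>n. al lam g i * c (n - i))"
proof -
  have "(\<Sum>i\<le>n. al lam g i * c (n - i)) = al lam g 0 * c n + (\<Sum>i\<in>{1..n}. al lam g i * c (n - i))"
  proof -
    have "{..n} = insert 0 {1..n}" by auto
    then show ?thesis by simp
  qed
  also have "(\<Sum>i\<in>{1..n}. al lam g i * c (n - i)) = lam * (\<Sum>i=1..n. g i * c (n - i))"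
    unfolding sum_distrib_left by (rule sum.cong) (auto simp: al_def)
  finally show ?thesis by (simp add: cv_def al_def)
qed

lemma pgf_summable:
  assumes "summable (\<lambda>n. \<bar>c n\<bar>)" "norm x \<le> 1"
  shows "summable (\<lambda>n. norm (complex_of_real (c n) * x ^ n))"
proof (rule summable_comparison_test[OF _ assms(1)])
  show "\<exists>N. \<forall>n\<ge>N. norm (norm (complex_of_real (c n) * x ^ n)) \<le> \<bar>c n\<bar>"
  proof (intro exI allI impI)
    fix n
    have "norm (x ^ n) \<le> 1" using assms(2) by (simp add: norm_power power_le_one)
    then show "norm (norm (complex_of_real (c n) * x ^ n)) \<le> \<bar>c n\<bar>"
      by (simp add: norm_mult mult_left_le)
  qed
qed

lemma pgf_sums:
  assumes "summable (\<lambda>n. \<bar>c n\<bar>)" "norm x \<le> 1"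
  shows "(\<lambda>n. complex_of_real (c n) * x ^ n) sums pgf c x"
  unfolding pgf_def by (rule summable_sums, rule summable_norm_cancel, rule pgf_summable[OF assms])

lemma pgf_norm_le:
  assumes "summable (\<lambda>n. \<bar>c n\<bar>)" "norm x \<le> 1"
  shows "norm (pgf c x) \<le> (\<Sum>n. \<bar>c n\<bar>)"
  unfolding pgf_def
proof (rule norm_suminf_le[OF _ assms(1)])
  fix n
  have "norm (x ^ n) \<le> 1" using assms(2) by (simp add: norm_power power_le_one)
  then show "norm (complex_of_real (c n) * x ^ n) \<le> \<bar>c n\<bar>"
    by (simp add: norm_mult mult_left_le)
qed

locale gl =
  fixes lam :: real and g :: "nat \<Rightarrow> real"
  assumes lam0: "0 < lam" and lam1: "lam < 1"
    and g_nonneg: "\<And>m. 0 \<le> g m" and g0: "g 0 = 0" and g_sum: "g sums 1"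
begin

lemma g_summ: "summable (\<lambda>n. \<bar>g n\<bar>)"
  using g_sum g_nonneg by (simp add: sums_iff)

lemma al_nonneg: "0 \<le> al lam g n"
  using lam0 lam1 g_nonneg by (simp add: al_def)

lemma al_summ: "summable (\<lambda>n. \<bar>al lam g n\<bar>)"
proof -
  have "summable (\<lambda>n. \<bar>al lam g (n + 1)\<bar>)"
    using summable_ignore_initial_segment[OF g_summ, of 1] lam0 by (simp add: al_def abs_mult summable_mult)
  then show ?thesis using summable_iff_shift[of "\<lambda>n. \<bar>al lam g n\<bar>" 1] by blast
qed

lemma pgf_al:
  assumes "norm x \<le> 1"
  shows "pgf (al lam g) x = Aval lam g x"
proof -
  have e: "complex_of_real (al lam g n) * x ^ n =
     (if n = 0 then complex_of_real (1 - lam) else 0) + complex_of_real lam * (complex_of_real (g n) * x ^ n)" for n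
    by (simp add: al_def g0)
  have "(\<lambda>n. (if n = 0 then complex_of_real (1 - lam) else 0) + complex_of_real lam * (complex_of_real (g n) * x ^ n))
        sums (complex_of_real (1 - lam) + complex_of_real lam * pgf g x)"
    apply (rule sums_add)
    using sums_single[of 0 "\<lambda>_. complex_of_real (1 - lam)"] apply simp
    apply (rule sums_mult)
    using pgf_sums[OF g_summ assms] .
  then show ?thesis unfolding pgf_def Aval_def e[symmetric] by (simp add: sums_iff)
qed

lemma norm_Aval:
  assumes "norm x \<le> 1"
  shows "norm (Aval lam g x) \<le> 1"
proof -
  have "norm (pgf (al lam g) x) \<le> (\<Sum>n. \<bar>al lam g n\<bar>)"
    by (rule pgf_norm_le[OF al_summ assms])
  also have "(\<Sum>n. \<bar>al lam g n\<bar>) = 1"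
  proof -
    have "(\<lambda>n. \<bar>al lam g n\<bar>) = (\<lambda>n. (if n = 0 then 1 - lam else 0) + lam * g n)"
      using al_nonneg by (auto simp: al_def g0)
    moreover have "(\<lambda>n. (if n = 0 then 1 - lam else 0) + lam * g n) sums ((1 - lam) + lam * 1)"
      apply (rule sums_add)
      using sums_single[of 0 "\<lambda>_. 1 - lam"] apply simp
      by (rule sums_mult[OF g_sum])
    ultimately show ?thesis by (simp add: sums_iff)
  qed
  finally show ?thesis using pgf_al[OF assms] by simp
qed

lemma conv_pgf:
  assumes x: "norm x \<le> 1" and c: "summable (\<lambda>n. \<bar>c n\<bar>)"
  shows "summable (\<lambda>n. \<bar>cv lam g c n\<bar>)"
    and "pgf (cv lam g c) x = Aval lam g x * pgf c x"
proof -
  have s1: "summable (\<lambda>k. \<Sum>i\<le>k. \<bar>al lam g i\<bar> * \<bar>c (k - i)\<bar>)"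
    using summable_Cauchy_product[of "\<lambda>i. \<bar>al lam g i\<bar>" "\<lambda>i. \<bar>c i\<bar>"] al_summ c by simp
  show s2: "summable (\<lambda>n. \<bar>cv lam g c n\<bar>)"
  proof (rule summable_comparison_test[OF _ s1], intro exI allI impI)
    fix n
    have "\<bar>cv lam g c n\<bar> \<le> (\<Sum>i\<le>n. \<bar>al lam g i * c (n - i)\<bar>)"
      unfolding cv_alt[where g=g, OF g0] by (rule sum_abs)
    then show "norm \<bar>cv lam g c n\<bar> \<le> (\<Sum>i\<le>n. \<bar>al lam g i\<bar> * \<bar>c (n - i)\<bar>)"
      by (simp add: abs_mult)
  qed
  have "Aval lam g x * pgf c x =
     (\<Sum>k. \<Sum>i\<le>k. (complex_of_real (al lam g i) * x ^ i) * (complex_of_real (c (k - i)) * x ^ (k - i)))"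
    unfolding pgf_al[OF x, symmetric] pgf_def
    by (rule Cauchy_product[OF pgf_summable[OF al_summ x] pgf_summable[OF c x]])
  also have "\<dots> = (\<Sum>k. complex_of_real (cv lam g c k) * x ^ k)"
  proof (rule suminf_cong)
    fix k
    have "(\<Sum>i\<le>k. (complex_of_real (al lam g i) * x ^ i) * (complex_of_real (c (k - i)) * x ^ (k - i)))
       = (\<Sum>i\<le>k. complex_of_real (al lam g i * c (k - i)) * x ^ k)"
    proof (rule sum.cong[OF refl])
      fix i assume "i \<in> {..k}"
      then have xx: "x ^ i * x ^ (k - i) = x ^ k" by (simp add: power_add[symmetric])
      have "(complex_of_real (al lam g i) * x ^ i) * (complex_of_real (c (k - i)) * x ^ (k - i))
           = (complex_of_real (al lam g i) * complex_of_real (c (k - i))) * (x ^ i * x ^ (k - i))"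
        by (simp only: mult_ac)
      then show "(complex_of_real (al lam g i) * x ^ i) * (complex_of_real (c (k - i)) * x ^ (k - i))
           = complex_of_real (al lam g i * c (k - i)) * x ^ k"
        by (simp only: xx of_real_mult)
    qed
    also have "\<dots> = complex_of_real (cv lam g c k) * x ^ k"
      by (simp add: cv_alt[where g=g, OF g0] sum_distrib_right)
    finally show "(\<Sum>i\<le>k. (complex_of_real (al lam g i) * x ^ i) * (complex_of_real (c (k - i)) * x ^ (k - i)))
       = complex_of_real (cv lam g c k) * x ^ k" .
  qed
  finally show "pgf (cv lam g c) x = Aval lam g x * pgf c x" unfolding pgf_def by simp
qed

end



lemma extr_sum:
  fixes F :: "nat \<Rightarrow> nat \<Rightarrow> real"
  assumes S: "(\<lambda>(u,n). F u n) summable_on ({1..} \<times> UNIV)"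
    and nn: "\<And>u n. 1 \<le> u \<Longrightarrow> 0 \<le> F u n"
  shows "\<And>u. 1 \<le> u \<Longrightarrow> summable (F u)" and "(\<lambda>u. suminf (F u)) \<longlonglongrightarrow> 0"
proof -
  have son: "F u summable_on UNIV" if "1 \<le> u" for u
    using summable_on_SigmaD1[OF S, of u] that by simp
  show sm: "summable (F u)" if "1 \<le> u" for u
    using son[OF that] summable_on_UNIV_nonneg_real_iff[of "F u"] nn[OF that] by blast
  have eq: "infsum (F u) UNIV = suminf (F u)" if "1 \<le> u" for u
    using has_sum_imp_sums[OF has_sum_infsum[OF son[OF that]]] by (simp add: sums_iff)
  have "(\<lambda>u. infsum (\<lambda>n. F u n) UNIV) summable_on {1..}"
    using summable_on_SigmaD[OF S] son by auto
  moreover have "{1..} = Suc ` UNIV"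
    by (auto simp: image_iff) (metis Suc_pred' less_eq_Suc_le)
  ultimately have "((\<lambda>u. infsum (\<lambda>n. F u n) UNIV) \<circ> Suc) summable_on UNIV"
    using summable_on_reindex[of Suc UNIV "\<lambda>u. infsum (\<lambda>n. F u n) UNIV"] by simp
  then have "(\<lambda>u. suminf (F (Suc u))) summable_on UNIV"
    using eq by (simp add: o_def)
  then have "summable (\<lambda>u. suminf (F (Suc u)))"
    using summable_on_UNIV_nonneg_real_iff[of "\<lambda>u. suminf (F (Suc u))"] sm nn
    by (simp add: suminf_nonneg)
  then have "(\<lambda>u. suminf (F (Suc u))) \<longlonglongrightarrow> 0"
    by (rule summable_LIMSEQ_zero)
  then show "(\<lambda>u. suminf (F u)) \<longlonglongrightarrow> 0"
    by (rule LIMSEQ_imp_Suc)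
qed

lemma sum_atMost_split0:
  "(\<Sum>i\<le>(n::nat). f i) = f 0 + (\<Sum>i\<in>{1..n}. f i)"
proof -
  have "{..n} = insert 0 {1..n}" by auto
  then show ?thesis by simp
qed

context gl
begin

lemma serv:
  fixes F :: "nat \<Rightarrow> nat \<Rightarrow> real" and c s :: "nat \<Rightarrow> real"
  assumes x: "norm x \<le> 1"
    and F_nonneg: "\<And>u n. 1 \<le> u \<Longrightarrow> 0 \<le> F u n"
    and F_sum: "\<And>u. 1 \<le> u \<Longrightarrow> summable (F u)"
    and F_lim: "(\<lambda>u. suminf (F u)) \<longlonglongrightarrow> 0"
    and c_sum: "summable (\<lambda>n. \<bar>c n\<bar>)"
    and s_nonneg: "\<And>n. 0 \<le> s n" and s0: "s 0 = 0" and s_summ: "summable s"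
    and rec: "\<And>u n. 1 \<le> u \<Longrightarrow> F u n = cv lam g (F (u + 1)) n + s u * c n"
  shows "Aval lam g x * pgf (F 1) x = pgf s (Aval lam g x) * pgf c x"
proof -
  define A where "A = Aval lam g x"
  have nA: "norm A \<le> 1" unfolding A_def by (rule norm_Aval[OF x])
  have Fabs: "summable (\<lambda>n. \<bar>F u n\<bar>)" if "1 \<le> u" for u
    using F_sum[OF that] F_nonneg[OF that] by simp
  have step: "pgf (F u) x = A * pgf (F (u + 1)) x + complex_of_real (s u) * pgf c x" if u: "1 \<le> u" for u
  proof -
    have e: "complex_of_real (F u n) * x ^ n = complex_of_real (cv lam g (F (u + 1)) n) * x ^ n
       + complex_of_real (s u) * (complex_of_real (c n) * x ^ n)" for n
      using rec[OF u, of n] by (simp add: distrib_right)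
    have "(\<lambda>n. complex_of_real (cv lam g (F (u + 1)) n) * x ^ n
       + complex_of_real (s u) * (complex_of_real (c n) * x ^ n)) sums
       (pgf (cv lam g (F (u + 1))) x + complex_of_real (s u) * pgf c x)"
      apply (rule sums_add)
       apply (rule pgf_sums[OF conv_pgf(1)[OF x Fabs] x])
      using u apply simp
      apply (rule sums_mult)
      by (rule pgf_sums[OF c_sum x])
    then have "(\<lambda>n. complex_of_real (F u n) * x ^ n) sums
       (A * pgf (F (u + 1)) x + complex_of_real (s u) * pgf c x)"
    proof -
      have cp: "pgf (cv lam g (F (u+1))) x = A * pgf (F (u+1)) x"
        using conv_pgf(2)[OF x Fabs[of "u+1"]] u by (simp add: A_def)
      show ?thesis unfolding e using cp \<open>(\<lambda>n. _) sums _\<close> by simp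
    qed
    then show ?thesis unfolding pgf_def by (simp add: sums_iff)
  qed
  have iter: "A * pgf (F 1) x = (\<Sum>u\<in>{1..U}. complex_of_real (s u) * A ^ u) * pgf c x
      + A ^ (U + 1) * pgf (F (U + 1)) x" for U
  proof (induction U)
    case 0
    then show ?case by simp
  next
    case (Suc U)
    have "A ^ (U + 1) * pgf (F (U + 1)) x = A ^ (U + 1) * (A * pgf (F (Suc U + 1)) x
       + complex_of_real (s (Suc U)) * pgf c x)"
      using step[of "U + 1"] by simp
    then show ?case using Suc.IH by (simp add: algebra_simps)
  qed
  have l1: "(\<lambda>U. \<Sum>u\<in>{1..U}. complex_of_real (s u) * A ^ u) \<longlonglongrightarrow> pgf s A"
  proof -
    have "(\<lambda>u. complex_of_real (s u) * A ^ u) sums pgf s A"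
      by (rule pgf_sums[OF _ nA]) (use s_summ s_nonneg in simp)
    then have "(\<lambda>n. \<Sum>u<n. complex_of_real (s u) * A ^ u) \<longlonglongrightarrow> pgf s A"
      by (simp add: sums_def)
    then have "(\<lambda>n. \<Sum>u<Suc n. complex_of_real (s u) * A ^ u) \<longlonglongrightarrow> pgf s A"
      by (rule LIMSEQ_Suc)
    moreover have "(\<Sum>u<Suc n. complex_of_real (s u) * A ^ u) = (\<Sum>u\<in>{1..n}. complex_of_real (s u) * A ^ u)" for n
      unfolding lessThan_Suc_atMost sum_atMost_split0 by (simp add: s0)
    ultimately show ?thesis by simp
  qed
  have l2: "(\<lambda>U. A ^ (U + 1) * pgf (F (U + 1)) x) \<longlonglongrightarrow> 0"
  proof (rule Lim_null_comparison)
    show "\<forall>\<^sub>F U in sequentially. norm (A ^ (U + 1) * pgf (F (U + 1)) x) \<le> suminf (F (Suc U))"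
    proof (rule always_eventually, rule allI)
      fix U
      have n1: "norm (A ^ (U + 1)) \<le> 1" unfolding norm_power by (rule power_le_one[OF norm_ge_zero nA])
      have n2: "norm (pgf (F (U + 1)) x) \<le> (\<Sum>n. \<bar>F (U + 1) n\<bar>)"
        by (rule pgf_norm_le[OF Fabs x]) simp
      have n3: "(\<Sum>n. \<bar>F (U + 1) n\<bar>) = suminf (F (Suc U))"
        using F_nonneg[of "U + 1"] by simp
      have "norm (A ^ (U + 1) * pgf (F (U + 1)) x) = norm (A ^ (U + 1)) * norm (pgf (F (U + 1)) x)"
        by (rule norm_mult)
      also have "\<dots> \<le> 1 * norm (pgf (F (U + 1)) x)"
        by (rule mult_right_mono[OF n1 norm_ge_zero])
      also have "\<dots> \<le> suminf (F (Suc U))" using n2 n3 by simp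
      finally show "norm (A ^ (U + 1) * pgf (F (U + 1)) x) \<le> suminf (F (Suc U))" .
    qed
    show "(\<lambda>U. suminf (F (Suc U))) \<longlonglongrightarrow> 0" by (rule LIMSEQ_Suc[OF F_lim])
  qed
  have "(\<lambda>U. (\<Sum>u\<in>{1..U}. complex_of_real (s u) * A ^ u) * pgf c x
      + A ^ (U + 1) * pgf (F (U + 1)) x) \<longlonglongrightarrow> pgf s A * pgf c x + 0"
    by (intro tendsto_intros l1 l2)
  then have "(\<lambda>U. A * pgf (F 1) x) \<longlonglongrightarrow> pgf s A * pgf c x"
    using iter by simp
  then show ?thesis unfolding A_def[symmetric] using LIMSEQ_const_iff by blast
qed

end



function wr :: "(nat \<Rightarrow> real) \<Rightarrow> nat \<Rightarrow> real" where
  "wr g k = (if k = 0 then 1 else (\<Sum>l\<in>{1..k}. g l * wr g (k - l)))"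
  by auto
termination
  by (relation "Wellfounded.measure (\<lambda>(g, k). k)") auto

declare wr.simps[simp del]

lemma wr0: "wr g 0 = 1" by (subst wr.simps) simp

lemma wrS: "0 < k \<Longrightarrow> wr g k = (\<Sum>l\<in>{1..k}. g l * wr g (k - l))"
  by (subst wr.simps) simp

declare ecoef.simps[simp del]

lemma ecoef_wr: "n \<le> j \<Longrightarrow> ecoef g j n = wr g (j - n)"
proof (induction "j - n" arbitrary: n rule: less_induct)
  case less
  consider "n = j" | "n + 1 = j" | "n + 1 < j" using less.prems by linarith
  then show ?case
  proof cases
    case 1
    then show ?thesis by (subst ecoef.simps) (simp add: wr0)
  next
    case 2
    then have "j - n = 1" by simp
    then show ?thesis using 2 by (subst ecoef.simps) (simp add: wrS wr0)
  next
    case 3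
    have "ecoef g j n = (\<Sum>k\<in>{n+1..j-1}. ecoef g j k * g (k - n)) + g (j - n)"
      using 3 by (subst ecoef.simps) simp
    also have "(\<Sum>k\<in>{n+1..j-1}. ecoef g j k * g (k - n)) = (\<Sum>k\<in>{n+1..j-1}. wr g (j - k) * g (k - n))"
      by (rule sum.cong[OF refl]) (use less.hyps 3 in auto)
    also have "\<dots> + g (j - n) = (\<Sum>k\<in>{n+1..j}. wr g (j - k) * g (k - n))"
    proof -
      have "{n+1..j} = insert j {n+1..j-1}" using 3 by auto
      then show ?thesis using 3 by (simp add: wr0)
    qed
    also have "\<dots> = (\<Sum>l\<in>{1..j-n}. wr g (j - (l + n)) * g (l + n - n))"
      using sum.shift_bounds_cl_nat_ivl[of "\<lambda>k. wr g (j - k) * g (k - n)" 1 n "j - n"] 3 by simp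
    also have "\<dots> = (\<Sum>l\<in>{1..j-n}. g l * wr g (j - n - l))"
      by (rule sum.cong[OF refl]) (simp add: mult.commute add.commute)
    also have "\<dots> = wr g (j - n)" using 3 by (simp add: wrS)
    finally show ?thesis .
  qed
qed

lemma tri_swap:
  fixes f :: "nat \<Rightarrow> nat \<Rightarrow> 'a::comm_monoid_add"
  shows "(\<Sum>n=0..m. \<Sum>j=n..m. f n j) = (\<Sum>j=0..m. \<Sum>n=0..j. f n j)"
proof -
  have "(\<Sum>n\<in>{0..m}. \<Sum>j\<in>{y. y \<in> {0..m} \<and> n \<le> y}. f n j) = (\<Sum>j\<in>{0..m}. \<Sum>n\<in>{x. x \<in> {0..m} \<and> x \<le> j}. f n j)"
    by (rule sum.swap_restrict) auto
  moreover have "{y. y \<in> {0..m} \<and> n \<le> y} = {n..m}" for n by auto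
  moreover have "j \<in> {0..m} \<Longrightarrow> {x. x \<in> {0..m} \<and> x \<le> j} = {0..j}" for j by auto
  ultimately show ?thesis by simp
qed

lemma renewal:
  fixes y q :: "nat \<Rightarrow> real"
  assumes rec: "\<And>j. j \<le> m \<Longrightarrow> y j = q j + (\<Sum>i=1..j. g i * y (j - i))"
  shows "j \<le> m \<Longrightarrow> y j = (\<Sum>n=0..j. wr g (j - n) * q n)"
proof (induction j rule: less_induct)
  case (less j)
  have "y j = q j + (\<Sum>i=1..j. g i * (\<Sum>n=0..j-i. wr g (j - i - n) * q n))"
    unfolding rec[OF less.prems]
    by (rule arg_cong2[where f="(+)", OF refl], rule sum.cong[OF refl]) (use less in auto)
  also have "(\<Sum>i=1..j. g i * (\<Sum>n=0..j-i. wr g (j - i - n) * q n))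
      = (\<Sum>i\<in>{1..j}. \<Sum>n\<in>{n. n \<in> {0..j} \<and> n + i \<le> j}. g i * wr g (j - i - n) * q n)"
  proof (rule sum.cong[OF refl])
    fix i assume "i \<in> {1..j}"
    then have "{n. n \<in> {0..j} \<and> n + i \<le> j} = {0..j-i}" by auto
    then show "g i * (\<Sum>n=0..j-i. wr g (j - i - n) * q n) = (\<Sum>n\<in>{n. n \<in> {0..j} \<and> n + i \<le> j}. g i * wr g (j - i - n) * q n)"
      by (simp add: sum_distrib_left mult.assoc)
  qed
  also have "\<dots> = (\<Sum>n\<in>{0..j}. \<Sum>i\<in>{i. i \<in> {1..j} \<and> n + i \<le> j}. g i * wr g (j - i - n) * q n)"
    by (rule sum.swap_restrict) auto
  also have "\<dots> = (\<Sum>n\<in>{0..j}. (if n = j then 0 else wr g (j - n)) * q n)"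
  proof (rule sum.cong[OF refl])
    fix n assume n: "n \<in> {0..j}"
    have e: "{i. i \<in> {1..j} \<and> n + i \<le> j} = {1..j-n}" using n by auto
    show "(\<Sum>i\<in>{i. i \<in> {1..j} \<and> n + i \<le> j}. g i * wr g (j - i - n) * q n) = (if n = j then 0 else wr g (j - n)) * q n"
    proof (cases "n = j")
      case True
      then show ?thesis unfolding e by simp
    next
      case False
      then have "wr g (j - n) = (\<Sum>l\<in>{1..j-n}. g l * wr g (j - n - l))" using n by (simp add: wrS)
      moreover have "(\<Sum>l\<in>{1..j-n}. g l * wr g (j - n - l)) * q n = (\<Sum>i\<in>{1..j-n}. g i * wr g (j - i - n) * q n)"
        by (simp add: sum_distrib_right diff_commute add.commute)
      ultimately show ?thesis unfolding e using False by simp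
    qed
  qed
  also have "q j + \<dots> = (\<Sum>n=0..j. wr g (j - n) * q n)"
  proof -
    have "{0..j} = insert j {0..<j}" by auto
    then show ?thesis by (simp add: wr0)
  qed
  finally show ?case .
qed




lemma pgf_add:
  assumes "summable (\<lambda>n. \<bar>f n\<bar>)" "summable (\<lambda>n. \<bar>h n\<bar>)" "norm x \<le> 1"
  shows "pgf (\<lambda>n. f n + h n) x = pgf f x + pgf h x"
proof -
  have "(\<lambda>n. complex_of_real (f n) * x ^ n + complex_of_real (h n) * x ^ n) sums (pgf f x + pgf h x)"
    by (rule sums_add[OF pgf_sums[OF assms(1,3)] pgf_sums[OF assms(2,3)]])
  then show ?thesis unfolding pgf_def by (simp add: distrib_right sums_iff)
qed

lemma pgf_cmult:
  assumes "summable (\<lambda>n. \<bar>f n\<bar>)" "norm x \<le> 1"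
  shows "pgf (\<lambda>n. t * f n) x = complex_of_real t * pgf f x"
proof -
  have "(\<lambda>n. complex_of_real t * (complex_of_real (f n) * x ^ n)) sums (complex_of_real t * pgf f x)"
    by (rule sums_mult[OF pgf_sums[OF assms]])
  then show ?thesis unfolding pgf_def by (simp add: mult.assoc sums_iff)
qed

lemma pgf_sumR:
  assumes "finite R" "\<And>r. r \<in> R \<Longrightarrow> summable (\<lambda>n. \<bar>f r n\<bar>)" "norm x \<le> 1"
  shows "pgf (\<lambda>n. \<Sum>r\<in>R. f r n) x = (\<Sum>r\<in>R. pgf (f r) x)"
proof -
  have "(\<lambda>n. \<Sum>r\<in>R. complex_of_real (f r n) * x ^ n) sums (\<Sum>r\<in>R. pgf (f r) x)"
    by (rule sums_sum) (rule pgf_sums[OF assms(2) assms(3)])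
  then show ?thesis unfolding pgf_def by (simp add: sum_distrib_right sums_iff)
qed

lemma pgf_fin:
  "pgf (\<lambda>n. if n < k then f n else 0) x = (\<Sum>n<k. complex_of_real (f n) * x ^ n)"
proof -
  have "(\<lambda>n. complex_of_real (if n < k then f n else 0) * x ^ n) sums (\<Sum>n<k. complex_of_real (f n) * x ^ n)"
  proof -
    have "(\<lambda>n. complex_of_real (if n < k then f n else 0) * x ^ n) = (\<lambda>n. if n \<in> {..<k} then complex_of_real (f n) * x ^ n else 0)"
      by auto
    moreover have "(\<lambda>n. if n \<in> {..<k} then complex_of_real (f n) * x ^ n else 0) sums (\<Sum>n<k. complex_of_real (f n) * x ^ n)"
      by (rule sums_If_finite_set) simp
    ultimately show ?thesis by simp
  qed
  then show ?thesis unfolding pgf_def by (simp add: sums_iff)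
qed

lemma pgf_single:
  "pgf (\<lambda>n. if n = 0 then B else 0) x = complex_of_real B"
  using pgf_fin[of 1 "\<lambda>_. B" x] by (simp add: less_Suc_eq_0_disj)

lemma (in gl) cv_nonneg:
  assumes "\<And>n. 0 \<le> c n" shows "0 \<le> cv lam g c n"
  unfolding cv_def using assms g_nonneg lam0 lam1
  by (intro add_nonneg_nonneg mult_nonneg_nonneg sum_nonneg) auto

lemma summable_g_shift:
  assumes "summable g"
  shows "summable (\<lambda>m. g (m - i) :: real)"
proof -
  have "summable (\<lambda>m. g (m + i - i))" using assms by simp
  then show ?thesis using summable_iff_shift[of "\<lambda>m. g (m - i)" i] by simp
qed



theorem mainTheorem4:
  fixes a b :: nat and lam d :: real
    and g :: "nat \<Rightarrow> real" and s :: "nat \<Rightarrow> nat \<Rightarrow> real" and v :: "nat \<Rightarrow> real"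
    and p0 :: "nat \<Rightarrow> real" and p :: "nat \<Rightarrow> nat \<Rightarrow> nat \<Rightarrow> real" and Q :: "nat \<Rightarrow> nat \<Rightarrow> real"
    and x :: complex
  assumes ab: "1 \<le> a" "a \<le> b"
    and lam: "0 < lam" "lam < 1"
    and d: "d = 0 \<or> d = 1"
    (* group-size distribution *)
    and g_nonneg: "\<And>m. 0 \<le> g m" and g0: "g 0 = 0"
    and g_sum: "g sums 1" and g_mean: "summable (\<lambda>m. real m * g m)"
    (* service-time distributions *)
    and s_nonneg: "\<And>r n. a \<le> r \<Longrightarrow> r \<le> b \<Longrightarrow> 0 \<le> s r n"
    and s0: "\<And>r. a \<le> r \<Longrightarrow> r \<le> b \<Longrightarrow> s r 0 = 0"
    and s_sum: "\<And>r. a \<le> r \<Longrightarrow> r \<le> b \<Longrightarrow> s r sums 1"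
    and s_mean: "\<And>r. a \<le> r \<Longrightarrow> r \<le> b \<Longrightarrow> summable (\<lambda>n. real n * s r n)"
    (* vacation-time distribution *)
    and v_nonneg: "\<And>n. 0 \<le> v n" and v0: "v 0 = 0"
    and v_sum: "v sums 1" and v_mean: "summable (\<lambda>n. real n * v n)"
    (* traffic intensity rho = lam * gbar / (b * mu_b) with mu_b = 1 / s_b *)
    and rho: "lam * (\<Sum>m. real m * g m) * (\<Sum>n. real n * s b n) / real b < 1"
    (* stationary probabilities are nonnegative *)
    and p0_nonneg: "\<And>n. n < a \<Longrightarrow> 0 \<le> p0 n"
    and p_nonneg: "\<And>n r u. a \<le> r \<Longrightarrow> r \<le> b \<Longrightarrow> 1 \<le> u \<Longrightarrow> 0 \<le> p n r u"
    and Q_nonneg: "\<And>n u. 1 \<le> u \<Longrightarrow> 0 \<le> Q n u"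
    (* (E1) *)
    and E1: "p0 0 = (1 - d) * ((1 - lam) * p0 0 + (1 - lam) * Q 0 1)"
    (* (E2) *)
    and E2: "\<And>n. 1 \<le> n \<Longrightarrow> n \<le> a - 1 \<Longrightarrow>
      p0 n = (1 - d) * ((1 - lam) * p0 n + lam * (\<Sum>i=1..n. g i * p0 (n - i))
                        + (1 - lam) * Q n 1 + lam * (\<Sum>i=1..n. g i * Q (n - i) 1))"
    (* (E3) *)
    and E3: "\<And>r u. a \<le> r \<Longrightarrow> r \<le> b \<Longrightarrow> 1 \<le> u \<Longrightarrow>
      p 0 r u = (1 - lam) * p 0 r (u + 1) + s r u *
        ((\<Sum>m=a..b. (1 - lam) * p r m 1 + lam * (\<Sum>i=1..r. g i * p (r - i) m 1))
         + (1 - lam) * Q r 1 + lam * (\<Sum>i=1..r. g i * Q (r - i) 1)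
         + (1 - d) * lam * (\<Sum>i=0..a-1. g (r - i) * p0 i))"
    (* (E4) *)
    and E4: "\<And>n r u. 1 \<le> n \<Longrightarrow> a \<le> r \<Longrightarrow> r \<le> b - 1 \<Longrightarrow> 1 \<le> u \<Longrightarrow>
      p n r u = (1 - lam) * p n r (u + 1) + lam * (\<Sum>i=1..n. g i * p (n - i) r (u + 1))"
    (* (E5) *)
    and E5: "\<And>n u. 1 \<le> n \<Longrightarrow> 1 \<le> u \<Longrightarrow>
      p n b u = (1 - lam) * p n b (u + 1) + lam * (\<Sum>i=1..n. g i * p (n - i) b (u + 1)) + s b u *
        ((\<Sum>m=a..b. (1 - lam) * p (n + b) m 1 + lam * (\<Sum>i=1..n+b. g i * p (n + b - i) m 1))
         + (1 - lam) * Q (n + b) 1 + lam * (\<Sum>i=1..n+b. g i * Q (n + b - i) 1)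
         + (1 - d) * lam * (\<Sum>i=0..a-1. g (n + b - i) * p0 i))"
    (* (E6) *)
    and E6: "\<And>u. 1 \<le> u \<Longrightarrow>
      Q 0 u = (1 - lam) * Q 0 (u + 1) + (1 - lam) * ((\<Sum>m=a..b. p 0 m 1) + d * Q 0 1) * v u"
    (* (E7) *)
    and E7: "\<And>n u. 1 \<le> n \<Longrightarrow> n \<le> a - 1 \<Longrightarrow> 1 \<le> u \<Longrightarrow>
      Q n u = (1 - lam) * Q n (u + 1) + lam * (\<Sum>i=1..n. g i * Q (n - i) (u + 1))
        + v u * ((1 - lam) * ((\<Sum>m=a..b. p n m 1) + d * Q n 1)
                 + lam * (\<Sum>i=1..n. g i * ((\<Sum>m=a..b. p (n - i) m 1) + d * Q (n - i) 1)))"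
    (* (E8) *)
    and E8: "\<And>n u. a \<le> n \<Longrightarrow> 1 \<le> u \<Longrightarrow>
      Q n u = (1 - lam) * Q n (u + 1) + lam * (\<Sum>i=1..n. g i * Q (n - i) (u + 1))"
    (* (N) *)
    and p_summable: "(\<lambda>(n, r, u). p n r u) summable_on (UNIV \<times> {a..b} \<times> {1..})"
    and Q_summable: "(\<lambda>(n, u). Q n u) summable_on (UNIV \<times> {1..})"
    and N: "(1 - d) * (\<Sum>n=0..a-1. p0 n)
            + infsum (\<lambda>(n, r, u). p n r u) (UNIV \<times> {a..b} \<times> {1..})
            + infsum (\<lambda>(n, u). Q n u) (UNIV \<times> {1..}) = 1"
    (* the point x *)
    and x: "norm x \<le> 1"
    and xden: "x ^ b \<noteq> Kfun lam g s b x"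
  shows "(\<Sum>n. complex_of_real (pplus lam g a b p Q n) * x ^ n) =
     ( (\<Sum>n=0..a-1. complex_of_real (pplus lam g a b p Q n) * x ^ n)
          * (Hfun lam g v x - 1) * Kfun lam g s b x
     + (\<Sum>n=0..a-1. complex_of_real (Qplus lam g a b p Q n) *
          ( x ^ n * (complex_of_real d * Hfun lam g v x - 1) * Kfun lam g s b x
          + x ^ b * complex_of_real (1 - d) *
              (\<Sum>j=n..a-1. complex_of_real (ecoef g j n) *
                 ( (\<Sum>i=a..b. complex_of_real (g (i - j)) * Kfun lam g s i x)
                 + (\<Sum>i. if b + 1 - j \<le> i then complex_of_real (g i) * x ^ (i + j - b) else 0)
                     * Kfun lam g s b x))))
     + (\<Sum>n=a..b-1. complex_of_real (pplus lam g a b p Q n + Qplus lam g a b p Q n) *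
          (x ^ b * Kfun lam g s n x - x ^ n * Kfun lam g s b x)) )
     / (x ^ b - Kfun lam g s b x)"
proof -
  interpret gl lam g
    by unfold_locales (use lam g_nonneg g0 g_sum in auto)
  define A where "A = Aval lam g x"
  have nA: "norm A \<le> 1" unfolding A_def by (rule norm_Aval[OF x])
  have KA: "Kfun lam g s r x = pgf (s r) A" for r
    unfolding Kfun_def A_def Aval_def ..
  have HA: "Hfun lam g v x = pgf v A"
    unfolding Hfun_def A_def Aval_def ..
  define tau where "tau = tauc a b p Q"
  define pp where "pp = pplus lam g a b p Q"
  define qp where "qp = Qplus lam g a b p Q"
  have pp_eq: "pp n = (\<Sum>r=a..b. cv lam g (\<lambda>m. p m r 1) n) / tau" for n
    unfolding pp_def pplus_def pplus_r_def tau_def cv_def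
    by (cases "n = 0") (simp_all add: sum_divide_distrib)
  have qp_eq: "qp n = cv lam g (\<lambda>m. Q m 1) n / tau" for n
    unfolding qp_def Qplus_def tau_def cv_def
    by (cases "n = 0") simp_all
  show ?thesis
  proof (cases "tau = 0")
    case True
    then have "pp n = 0" "qp n = 0" for n using pp_eq qp_eq by simp_all
    then show ?thesis unfolding pp_def[symmetric] qp_def[symmetric] by (simp add: pgf_def[symmetric])
  next
    case tau0: False
    have pS: "(\<lambda>(u,n). p n r u) summable_on ({1..} \<times> UNIV)" if r: "r \<in> {a..b}" for r
    proof -
      define h where "h = (\<lambda>(u::nat, n::nat). (n, r, u))"
      have "h ` ({1..} \<times> UNIV) \<subseteq> UNIV \<times> {a..b} \<times> {1..}" using r by (auto simp: h_def)
      then have "(\<lambda>(n, r, u). p n r u) summable_on (h ` ({1..} \<times> UNIV))"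
        by (rule summable_on_subset_banach[OF p_summable])
      moreover have "inj_on h ({1..} \<times> UNIV)" by (auto simp: h_def inj_on_def)
      ultimately have "((\<lambda>(n, r, u). p n r u) \<circ> h) summable_on ({1..} \<times> UNIV)"
        using summable_on_reindex by blast
      moreover have "((\<lambda>(n, r, u). p n r u) \<circ> h) = (\<lambda>(u,n). p n r u)"
        by (auto simp: h_def fun_eq_iff)
      ultimately show ?thesis by simp
    qed
    have QS: "(\<lambda>(u,n). Q n u) summable_on ({1..} \<times> UNIV)"
    proof -
      define h where "h = (\<lambda>(u::nat, n::nat). (n, u))"
      have "h ` ({1..} \<times> UNIV) \<subseteq> UNIV \<times> {1..}" by (auto simp: h_def)
      then have "(\<lambda>(n, u). Q n u) summable_on (h ` ({1..} \<times> UNIV))"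
        by (rule summable_on_subset_banach[OF Q_summable])
      moreover have "inj_on h ({1..} \<times> UNIV)" by (auto simp: h_def inj_on_def)
      ultimately have "((\<lambda>(n, u). Q n u) \<circ> h) summable_on ({1..} \<times> UNIV)"
        using summable_on_reindex by blast
      moreover have "((\<lambda>(n, u). Q n u) \<circ> h) = (\<lambda>(u,n). Q n u)"
        by (auto simp: h_def fun_eq_iff)
      ultimately show ?thesis by simp
    qed
    have psum: "summable (\<lambda>n. p n r u)" if "r \<in> {a..b}" "1 \<le> u" for r u
      using extr_sum(1)[of "\<lambda>u n. p n r u", OF pS[OF that(1)]] p_nonneg that by auto
    have plim: "(\<lambda>u. suminf (\<lambda>n. p n r u)) \<longlonglongrightarrow> 0" if "r \<in> {a..b}" for r
      using extr_sum(2)[of "\<lambda>u n. p n r u", OF pS[OF that(1)]] p_nonneg that by auto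
    have Qsum: "summable (\<lambda>n. Q n u)" if "1 \<le> u" for u
      using extr_sum(1)[of "\<lambda>u n. Q n u", OF QS] Q_nonneg that by auto
    have Qlim: "(\<lambda>u. suminf (\<lambda>n. Q n u)) \<longlonglongrightarrow> 0"
      using extr_sum(2)[of "\<lambda>u n. Q n u", OF QS] Q_nonneg by auto
    have P1abs: "summable (\<lambda>n. \<bar>p n r 1\<bar>)" if "r \<in> {a..b}" for r
      using psum[OF that order_refl] p_nonneg that by simp
    have Q1abs: "summable (\<lambda>n. \<bar>Q n 1\<bar>)"
      using Qsum[OF order_refl] Q_nonneg by simp
    have cvP_nn: "0 \<le> cv lam g (\<lambda>m. p m r 1) n" if "r \<in> {a..b}" for r n
      by (rule cv_nonneg) (use p_nonneg that in auto)
    have cvQ_nn: "0 \<le> cv lam g (\<lambda>m. Q m 1) n" for n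
      by (rule cv_nonneg) (use Q_nonneg in auto)
    have cvP_sum: "summable (\<lambda>n. cv lam g (\<lambda>m. p m r 1) n)" if "r \<in> {a..b}" for r
      using conv_pgf(1)[OF x P1abs[OF that]] summable_rabs_cancel by blast
    have cvQ_sum: "summable (\<lambda>n. cv lam g (\<lambda>m. Q m 1) n)"
      using conv_pgf(1)[OF x Q1abs] summable_rabs_cancel by blast
    define Br where "Br m = (\<Sum>m'=a..b. cv lam g (\<lambda>k. p k m' 1) m) + cv lam g (\<lambda>k. Q k 1) m
        + (1 - d) * lam * (\<Sum>i=0..a-1. g (m - i) * p0 i)" for m
    have d01: "0 \<le> 1 - d" using d by auto
    have Br_nn: "0 \<le> Br m" for m
      unfolding Br_def using cvP_nn cvQ_nn d01 lam g_nonneg p0_nonneg ab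
      by (intro add_nonneg_nonneg sum_nonneg mult_nonneg_nonneg) auto
    have Br_sum: "summable Br"
    proof -
      have "summable (\<lambda>m. (\<Sum>m'=a..b. cv lam g (\<lambda>k. p k m' 1) m) + cv lam g (\<lambda>k. Q k 1) m
        + (1 - d) * lam * (\<Sum>i=0..a-1. g (m - i) * p0 i))"
        apply (intro summable_add summable_sum summable_mult summable_mult2 cvQ_sum)
         apply (rule cvP_sum, simp)
        apply (rule summable_g_shift)
        using g_sum by (simp add: sums_iff)
      then show ?thesis by (simp add: Br_def[abs_def])
    qed
    have Br_abs: "summable (\<lambda>n. \<bar>Br (n + b)\<bar>)"
      using Br_sum Br_nn by simp
    have servr: "A * pgf (\<lambda>n. p n r 1) x = Kfun lam g s r x * complex_of_real (Br r)"
      if r: "a \<le> r" "r \<le> b - 1" for r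
    proof -
      have rab: "r \<in> {a..b}" "a \<le> r" "r \<le> b" using r ab by auto
      have "A * pgf ((\<lambda>u n. p n r u) 1) x = pgf (s r) A * pgf (\<lambda>n. if n = 0 then Br r else 0) x"
        unfolding A_def
      proof (rule serv[OF x])
        show "0 \<le> p n r u" if "1 \<le> u" for u n using p_nonneg rab that by auto
        show "summable (\<lambda>n. p n r u)" if "1 \<le> u" for u using psum rab that by auto
        show "(\<lambda>u. suminf (\<lambda>n. p n r u)) \<longlonglongrightarrow> 0" using plim rab by auto
        have eq: "(\<lambda>n. \<bar>if n = 0 then Br r else 0\<bar>) = (\<lambda>n. if n = 0 then \<bar>Br r\<bar> else 0)" by auto
        show "summable (\<lambda>n. \<bar>if n = 0 then Br r else 0\<bar>)"
          unfolding eq by (rule summable_single)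
        show "0 \<le> s r n" for n using s_nonneg rab by auto
        show "s r 0 = 0" using s0 rab by auto
        show "summable (s r)" using s_sum rab by (auto simp: sums_iff)
        show "p n r u = cv lam g (\<lambda>n. p n r (u + 1)) n + s r u * (if n = 0 then Br r else 0)"
          if u: "1 \<le> u" for u n
        proof (cases "n = 0")
          case True
          then show ?thesis using E3[OF rab(2,3) u] by (simp add: cv_def Br_def)
        next
          case False
          then show ?thesis using E4[of n r u] r u by (simp add: cv_def)
        qed
      qed
      then show ?thesis by (simp add: pgf_single KA)
    qed
    have servb: "A * pgf (\<lambda>n. p n b 1) x = Kfun lam g s b x * pgf (\<lambda>n. Br (n + b)) x"
    proof -
      have rab: "b \<in> {a..b}" "a \<le> b" "b \<le> b" using ab by auto
      have "A * pgf ((\<lambda>u n. p n b u) 1) x = pgf (s b) A * pgf (\<lambda>n. Br (n + b)) x"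
        unfolding A_def
      proof (rule serv[OF x])
        show "0 \<le> p n b u" if "1 \<le> u" for u n using p_nonneg rab that by auto
        show "summable (\<lambda>n. p n b u)" if "1 \<le> u" for u using psum rab that by auto
        show "(\<lambda>u. suminf (\<lambda>n. p n b u)) \<longlonglongrightarrow> 0" using plim rab by auto
        show "summable (\<lambda>n. \<bar>Br (n + b)\<bar>)" by (rule Br_abs)
        show "0 \<le> s b n" for n using s_nonneg rab by auto
        show "s b 0 = 0" using s0 rab by auto
        show "summable (s b)" using s_sum rab by (auto simp: sums_iff)
        show "p n b u = cv lam g (\<lambda>n. p n b (u + 1)) n + s b u * Br (n + b)"
          if u: "1 \<le> u" for u n
        proof (cases "n = 0")
          case True
          then show ?thesis using E3[OF rab(2,3) u] by (simp add: cv_def Br_def)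
        next
          case False
          then show ?thesis using E5[of n u] u by (simp add: cv_def Br_def)
        qed
      qed
      then show ?thesis by (simp add: KA)
    qed
    define W where "W n = (\<Sum>m=a..b. cv lam g (\<lambda>k. p k m 1) n) + d * cv lam g (\<lambda>k. Q k 1) n" for n
    have Wid: "(1 - lam) * ((\<Sum>m=a..b. p n m 1) + d * Q n 1)
       + lam * (\<Sum>i=1..n. g i * ((\<Sum>m=a..b. p (n - i) m 1) + d * Q (n - i) 1)) = W n" for n
    proof -
      have s1: "(\<Sum>i=1..n. g i * ((\<Sum>m=a..b. p (n - i) m 1) + d * Q (n - i) 1))
          = (\<Sum>m=a..b. \<Sum>i=1..n. g i * p (n - i) m 1) + d * (\<Sum>i=1..n. g i * Q (n - i) 1)"
        unfolding distrib_left sum.distrib sum_distrib_left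
        by (subst sum.swap) (simp add: mult_ac)
      show ?thesis unfolding s1 W_def cv_def
        by (simp add: sum.distrib sum_subtractf sum_distrib_left algebra_simps)
    qed
    have servQ: "A * pgf (\<lambda>n. Q n 1) x = Hfun lam g v x * (\<Sum>n<a. complex_of_real (W n) * x ^ n)"
    proof -
      have "A * pgf ((\<lambda>u n. Q n u) 1) x = pgf v A * pgf (\<lambda>n. if n < a then W n else 0) x"
        unfolding A_def
      proof (rule serv[OF x])
        show "0 \<le> Q n u" if "1 \<le> u" for u n using Q_nonneg that by auto
        show "summable (\<lambda>n. Q n u)" if "1 \<le> u" for u using Qsum that by auto
        show "(\<lambda>u. suminf (\<lambda>n. Q n u)) \<longlonglongrightarrow> 0" using Qlim by auto
        have eq: "(\<lambda>n. \<bar>if n < a then W n else 0\<bar>) = (\<lambda>n. if n \<in> {..<a} then \<bar>W n\<bar> else 0)" by auto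
        show "summable (\<lambda>n. \<bar>if n < a then W n else 0\<bar>)"
          unfolding eq by (rule sums_summable[OF sums_If_finite_set]) simp
        show "0 \<le> v n" for n using v_nonneg by auto
        show "v 0 = 0" using v0 by auto
        show "summable v" using v_sum by (auto simp: sums_iff)
        show "Q n u = cv lam g (\<lambda>n. Q n (u + 1)) n + v u * (if n < a then W n else 0)"
          if u: "1 \<le> u" for u n
        proof -
          consider "n = 0" | "1 \<le> n" "n \<le> a - 1" | "a \<le> n" using ab by linarith
          then show ?thesis
          proof cases
            case 1
            have W0: "W 0 = (1 - lam) * ((\<Sum>m=a..b. p 0 m 1) + d * Q 0 1)"
              using Wid[of 0] by simp
            have "Q 0 u = (1 - lam) * Q 0 (u + 1) + v u * W 0" unfolding W0 using E6[OF u] by (simp add: mult_ac)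
            then show ?thesis using 1 ab by (simp add: cv_def)
          next
            case 2
            then have "n < a" by simp
            then show ?thesis using E7[OF 2 u, unfolded Wid] by (simp add: cv_def)
          next
            case 3
            then show ?thesis using E8[OF 3 u] by (simp add: cv_def)
          qed
        qed
      qed
      then show ?thesis by (simp add: pgf_fin HA)
    qed
    have tau_nn: "0 \<le> tau"
    proof -
      have "0 \<le> (\<Sum>m. \<Sum>r=a..b. p m r 1)"
        by (rule suminf_nonneg) (use psum p_nonneg in \<open>auto intro!: summable_sum sum_nonneg\<close>)
      moreover have "0 \<le> (\<Sum>m. Q m 1)"
        by (rule suminf_nonneg) (use Qsum Q_nonneg in auto)
      ultimately show ?thesis unfolding tau_def tauc_def by simp
    qed
    then have taupos: "0 < tau" using tau0 by simp
    have pp_nn: "0 \<le> pp n" for n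
      unfolding pp_eq using taupos cvP_nn by (auto intro!: divide_nonneg_pos sum_nonneg)
    have qp_nn: "0 \<le> qp n" for n
      unfolding qp_eq using taupos cvQ_nn by (auto intro!: divide_nonneg_pos)
    have sumcvP: "summable (\<lambda>n. \<Sum>r=a..b. cv lam g (\<lambda>m. p m r 1) n)"
      by (rule summable_sum) (rule cvP_sum, simp)
    have "summable (\<lambda>n. pp n)"
      unfolding pp_eq using summable_divide[OF sumcvP, of tau] by simp
    then have ppS: "summable (\<lambda>n. \<bar>pp n\<bar>)" using pp_nn by simp
    have "summable (\<lambda>n. qp n)"
      unfolding qp_eq using summable_divide[OF cvQ_sum, of tau] by simp
    then have qpS: "summable (\<lambda>n. \<bar>qp n\<bar>)" using qp_nn by simp
    have "(\<lambda>n. \<bar>\<Sum>r=a..b. cv lam g (\<lambda>m. p m r 1) n\<bar>) = (\<lambda>n. \<Sum>r=a..b. cv lam g (\<lambda>m. p m r 1) n)"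
    proof (rule ext, rule abs_of_nonneg)
      show "0 \<le> (\<Sum>r=a..b. cv lam g (\<lambda>m. p m r 1) n)" for n
        by (rule sum_nonneg) (use cvP_nn in auto)
    qed
    then have sumcvPabs: "summable (\<lambda>n. \<bar>\<Sum>r=a..b. cv lam g (\<lambda>m. p m r 1) n\<bar>)"
      using sumcvP by simp
    have pp_tau: "tau * pp n = (\<Sum>r=a..b. cv lam g (\<lambda>m. p m r 1) n)" for n
      using tau0 unfolding pp_eq by simp
    have qp_tau: "tau * qp n = cv lam g (\<lambda>m. Q m 1) n" for n
      using tau0 unfolding qp_eq by simp
    have W_eq: "W n = tau * (pp n + d * qp n)" for n
      unfolding W_def distrib_left pp_tau qp_tau[symmetric] by (simp add: mult_ac)
    have Br_eq: "Br m = tau * (pp m + qp m) + (1 - d) * lam * (\<Sum>i=0..a-1. g (m - i) * p0 i)" for m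
      unfolding Br_def distrib_left pp_tau qp_tau ..
    have Pp1: "complex_of_real tau * pgf pp x = (\<Sum>r=a..b. A * pgf (\<lambda>n. p n r 1) x)"
    proof -
      have "pgf pp x = pgf (\<lambda>n. (1 / tau) * (\<Sum>r=a..b. cv lam g (\<lambda>m. p m r 1) n)) x"
        unfolding pp_eq by simp
      also have "\<dots> = complex_of_real (1 / tau) * pgf (\<lambda>n. \<Sum>r=a..b. cv lam g (\<lambda>m. p m r 1) n) x"
        by (rule pgf_cmult[OF sumcvPabs x])
      also have "pgf (\<lambda>n. \<Sum>r=a..b. cv lam g (\<lambda>m. p m r 1) n) x = (\<Sum>r=a..b. pgf (cv lam g (\<lambda>m. p m r 1)) x)"
        by (rule pgf_sumR[OF _ _ x]) (use conv_pgf(1)[OF x P1abs] in auto)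
      also have "\<dots> = (\<Sum>r=a..b. A * pgf (\<lambda>n. p n r 1) x)"
      proof (rule sum.cong[OF refl])
        fix r assume "r \<in> {a..b}"
        then show "pgf (cv lam g (\<lambda>m. p m r 1)) x = A * pgf (\<lambda>n. p n r 1) x"
          using conv_pgf(2)[OF x P1abs[of r]] unfolding A_def by simp
      qed
      finally show ?thesis using tau0 by simp
    qed
    have Qp1: "complex_of_real tau * pgf qp x = A * pgf (\<lambda>n. Q n 1) x"
    proof -
      have "pgf qp x = pgf (\<lambda>n. (1 / tau) * cv lam g (\<lambda>m. Q m 1) n) x"
        unfolding qp_eq by simp
      also have "\<dots> = complex_of_real (1 / tau) * pgf (cv lam g (\<lambda>m. Q m 1)) x"
        by (rule pgf_cmult[OF conv_pgf(1)[OF x Q1abs] x])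
      also have "pgf (cv lam g (\<lambda>m. Q m 1)) x = A * pgf (\<lambda>n. Q n 1) x"
        using conv_pgf(2)[OF x Q1abs] unfolding A_def by simp
      finally show ?thesis using tau0 by simp
    qed
    define K where "K = (\<lambda>r. Kfun lam g s r x)"
    define H where "H = Hfun lam g v x"
    define Pp where "Pp = pgf pp x"
    define Qp where "Qp = pgf qp x"
    define T where "T = (\<lambda>m. complex_of_real (pp m + qp m))"
    define cE where "cE = (\<lambda>j. complex_of_real ((1 - d) * lam * p0 j))"
    define Gt where "Gt = (\<lambda>j. (\<Sum>i. if b + 1 - j \<le> i then complex_of_real (g i) * x ^ (i + j - b) else 0))"
    define Z where "Z = (\<lambda>j. (\<Sum>i=a..b. complex_of_real (g (i - j)) * K i) + Gt j * K b)"
    define PB where "PB = pgf (\<lambda>n. Br (n + b)) x"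
    have gabs: "summable (\<lambda>m. \<bar>g (m - j)\<bar>)" for j
      using summable_g_shift[of g j] g_sum g_nonneg by (simp add: sums_iff)
    have Brabs: "summable (\<lambda>n. \<bar>Br n\<bar>)" using Br_sum Br_nn by simp
    have split_ab: "{a..b} = insert b {a..b-1}" "b \<notin> {a..b-1}" using ab by auto
    have tauPp: "complex_of_real tau * Pp = (\<Sum>r=a..b-1. K r * complex_of_real (Br r)) + K b * PB"
    proof -
      have "complex_of_real tau * Pp = A * pgf (\<lambda>n. p n b 1) x + (\<Sum>r=a..b-1. A * pgf (\<lambda>n. p n r 1) x)"
        unfolding Pp_def Pp1 split_ab(1) using split_ab(2) by simp
      also have "(\<Sum>r=a..b-1. A * pgf (\<lambda>n. p n r 1) x) = (\<Sum>r=a..b-1. K r * complex_of_real (Br r))"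
        by (rule sum.cong[OF refl]) (use servr in \<open>auto simp: K_def\<close>)
      finally show ?thesis using servb by (simp add: K_def PB_def)
    qed
    have Br_c: "complex_of_real (Br m) = complex_of_real tau * T m + (\<Sum>j=0..a-1. cE j * complex_of_real (g (m - j)))" for m
      unfolding Br_eq T_def cE_def by (simp add: sum_distrib_left mult_ac)
    have PB1: "x ^ b * PB = pgf Br x - (\<Sum>m<b. complex_of_real (Br m) * x ^ m)"
    proof -
      have "(\<lambda>i. complex_of_real (Br (i + b)) * x ^ (i + b)) sums (pgf Br x - (\<Sum>m<b. complex_of_real (Br m) * x ^ m))"
        using sums_split_initial_segment[OF pgf_sums[OF Brabs x], of b] by simp
      moreover have "(\<lambda>i. x ^ b * (complex_of_real (Br (i + b)) * x ^ i)) sums (x ^ b * PB)"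
        unfolding PB_def by (rule sums_mult[OF pgf_sums[OF Br_abs x]])
      moreover have "(\<lambda>i. x ^ b * (complex_of_real (Br (i + b)) * x ^ i)) = (\<lambda>i. complex_of_real (Br (i + b)) * x ^ (i + b))"
        by (simp add: power_add mult_ac)
      ultimately show ?thesis using sums_unique2 by metis
    qed
    have pgfBr: "pgf Br x = complex_of_real tau * (Pp + Qp) + (\<Sum>j=0..a-1. cE j * pgf (\<lambda>m. g (m - j)) x)"
    proof -
      have "(\<lambda>m. complex_of_real tau * (complex_of_real (pp m) * x ^ m) + complex_of_real tau * (complex_of_real (qp m) * x ^ m)
          + (\<Sum>j=0..a-1. cE j * (complex_of_real (g (m - j)) * x ^ m)))
          sums (complex_of_real tau * Pp + complex_of_real tau * Qp + (\<Sum>j=0..a-1. cE j * pgf (\<lambda>m. g (m - j)) x))"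
        unfolding Pp_def Qp_def
        by (intro sums_add sums_mult sums_sum pgf_sums[OF ppS x] pgf_sums[OF qpS x] pgf_sums[OF gabs x])
      moreover have "(\<lambda>m. complex_of_real tau * (complex_of_real (pp m) * x ^ m) + complex_of_real tau * (complex_of_real (qp m) * x ^ m)
          + (\<Sum>j=0..a-1. cE j * (complex_of_real (g (m - j)) * x ^ m))) = (\<lambda>m. complex_of_real (Br m) * x ^ m)"
        by (rule ext) (simp add: Br_c T_def sum_distrib_left sum_distrib_right algebra_simps)
      ultimately have "(\<lambda>m. complex_of_real (Br m) * x ^ m) sums (complex_of_real tau * Pp + complex_of_real tau * Qp + (\<Sum>j=0..a-1. cE j * pgf (\<lambda>m. g (m - j)) x))"
        by simp
      then have "pgf Br x = complex_of_real tau * Pp + complex_of_real tau * Qp + (\<Sum>j=0..a-1. cE j * pgf (\<lambda>m. g (m - j)) x)"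
        using pgf_sums[OF Brabs x] sums_unique2 by blast
      then show ?thesis by (simp add: distrib_left)
    qed
    have Gsplit: "pgf (\<lambda>m. g (m - j)) x - (\<Sum>m<b. complex_of_real (g (m - j)) * x ^ m)
        = x ^ b * (complex_of_real (g (b - j)) + Gt j)" if j: "j \<le> a - 1" for j
    proof -
      define k where "k = b + 1 - j"
      have k1: "1 \<le> k" and kb: "k + j = b + 1" using j ab unfolding k_def by auto
      have s1: "(\<lambda>i. complex_of_real (g (i + b - j)) * x ^ (i + b)) sums
          (pgf (\<lambda>m. g (m - j)) x - (\<Sum>m<b. complex_of_real (g (m - j)) * x ^ m))"
        using sums_split_initial_segment[OF pgf_sums[OF gabs x], of b] by simp
      define F where "F = (\<lambda>i. if k \<le> i then complex_of_real (g i) * x ^ (i + j - b) else 0)"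
      have "summable F"
      proof -
        have "norm (F i) \<le> \<bar>g i\<bar>" for i
        proof -
          have "norm (x ^ (i + j - b)) \<le> 1" unfolding norm_power by (rule power_le_one[OF norm_ge_zero x])
          then show ?thesis unfolding F_def by (auto simp: norm_mult intro!: mult_left_le)
        qed
        then have "summable (\<lambda>i. norm (F i))"
          by (intro summable_comparison_test[OF _ g_summ]) auto
        then show ?thesis by (rule summable_norm_cancel)
      qed
      define h where "h = (\<lambda>i. complex_of_real (g (i + b - j)) * x ^ i)"
      have z: "(\<Sum>i<k. F i) = 0" by (rule sum.neutral) (simp add: F_def)
      have "F sums (suminf F + (\<Sum>i<k. F i))" unfolding z using summable_sums[OF \<open>summable F\<close>] by simp
      then have "(\<lambda>i. F (i + k)) sums (suminf F)" using sums_iff_shift[of F k "suminf F"] by (simp only:)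
      moreover have "(\<lambda>i. F (i + k)) = (\<lambda>i. h (Suc i))"
      proof (rule ext)
        fix i
        have ar1: "i + k + j - b = Suc i" using kb by presburger
        have ar2: "i + k = Suc i + b - j" using kb by presburger
        have "F (i + k) = complex_of_real (g (i + k)) * x ^ (i + k + j - b)" unfolding F_def by simp
        also have "\<dots> = h (Suc i)" unfolding h_def unfolding ar1 unfolding ar2 ..
        finally show "F (i + k) = h (Suc i)" .
      qed
      ultimately have "(\<lambda>i. h (Suc i)) sums suminf F" by simp
      then have "h sums (suminf F + h 0)" by (simp add: sums_Suc_iff)
      then have "(\<lambda>i. x ^ b * h i) sums (x ^ b * (suminf F + h 0))" by (rule sums_mult)
      moreover have "(\<lambda>i. x ^ b * h i) = (\<lambda>i. complex_of_real (g (i + b - j)) * x ^ (i + b))"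
        by (auto simp: h_def power_add mult_ac)
      ultimately have "(\<lambda>i. complex_of_real (g (i + b - j)) * x ^ (i + b)) sums (x ^ b * (suminf F + h 0))" by simp
      with s1 have "pgf (\<lambda>m. g (m - j)) x - (\<Sum>m<b. complex_of_real (g (m - j)) * x ^ m) = x ^ b * (suminf F + h 0)"
        using sums_unique2 by blast
      moreover have "suminf F = Gt j" unfolding F_def Gt_def k_def ..
      ultimately show ?thesis by (simp add: h_def)
    qed
    have finB: "(\<Sum>m<b. complex_of_real (Br m) * x ^ m) = complex_of_real tau * (\<Sum>m<b. T m * x ^ m)
        + (\<Sum>j=0..a-1. cE j * (\<Sum>m<b. complex_of_real (g (m - j)) * x ^ m))"
    proof -
      have "(\<Sum>m<b. complex_of_real (Br m) * x ^ m) = (\<Sum>m<b. complex_of_real tau * (T m * x ^ m)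
          + (\<Sum>j=0..a-1. cE j * (complex_of_real (g (m - j)) * x ^ m)))"
        by (rule sum.cong[OF refl]) (simp add: Br_c distrib_left distrib_right sum_distrib_left sum_distrib_right mult_ac)
      also have "\<dots> = complex_of_real tau * (\<Sum>m<b. T m * x ^ m)
          + (\<Sum>m<b. \<Sum>j=0..a-1. cE j * (complex_of_real (g (m - j)) * x ^ m))"
        by (simp add: sum.distrib sum_distrib_left)
      also have "(\<Sum>m<b. \<Sum>j=0..a-1. cE j * (complex_of_real (g (m - j)) * x ^ m))
          = (\<Sum>j=0..a-1. \<Sum>m<b. cE j * (complex_of_real (g (m - j)) * x ^ m))"
        by (rule sum.swap)
      finally show ?thesis by (simp add: sum_distrib_left)
    qed
    have xPB: "x ^ b * PB = complex_of_real tau * (Pp + Qp - (\<Sum>m<b. T m * x ^ m))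
        + (\<Sum>j=0..a-1. cE j * (x ^ b * (complex_of_real (g (b - j)) + Gt j)))"
    proof -
      have "x ^ b * PB = complex_of_real tau * (Pp + Qp) - complex_of_real tau * (\<Sum>m<b. T m * x ^ m)
          + (\<Sum>j=0..a-1. cE j * (pgf (\<lambda>m. g (m - j)) x - (\<Sum>m<b. complex_of_real (g (m - j)) * x ^ m)))"
        unfolding PB1 pgfBr finB by (simp add: right_diff_distrib sum_subtractf)
      also have "(\<Sum>j=0..a-1. cE j * (pgf (\<lambda>m. g (m - j)) x - (\<Sum>m<b. complex_of_real (g (m - j)) * x ^ m)))
          = (\<Sum>j=0..a-1. cE j * (x ^ b * (complex_of_real (g (b - j)) + Gt j)))"
        by (rule sum.cong[OF refl]) (simp add: Gsplit)
      finally show ?thesis by (simp add: right_diff_distrib)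
    qed
    have atLa: "{..<a} = {0..a-1}" using ab by auto
    have tauQp: "complex_of_real tau * Qp = complex_of_real tau * (H * (\<Sum>n=0..a-1. complex_of_real (pp n + d * qp n) * x ^ n))"
    proof -
      have "complex_of_real tau * Qp = H * (\<Sum>n<a. complex_of_real (W n) * x ^ n)"
        unfolding Qp_def Qp1 servQ H_def ..
      also have "(\<Sum>n<a. complex_of_real (W n) * x ^ n) = complex_of_real tau * (\<Sum>n=0..a-1. complex_of_real (pp n + d * qp n) * x ^ n)"
        unfolding atLa W_eq by (simp add: sum_distrib_left mult_ac)
      finally show ?thesis by (simp add: mult_ac)
    qed
    have cE_e: "cE j = complex_of_real tau * complex_of_real (1 - d) * (\<Sum>n=0..j. complex_of_real (ecoef g j n) * complex_of_real (qp n))"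
      if j: "j \<le> a - 1" for j
    proof (cases "d = 0")
      case False
      then have "d = 1" using d by simp
      then show ?thesis by (simp add: cE_def)
    next
      case d0: True
      define y where "y = (\<lambda>j. lam * p0 j / tau)"
      have rec: "y j = qp j + (\<Sum>i=1..j. g i * y (j - i))" if "j \<le> a - 1" for j
      proof (cases "j = 0")
        case True
        have "lam * p0 0 = (1 - lam) * Q 0 1" using E1 d0 by (simp add: algebra_simps)
        then show ?thesis using True tau0 unfolding y_def qp_eq cv_def by (simp add: field_simps)
      next
        case False
        then have "1 \<le> j" by simp
        then have "lam * p0 j = lam * (\<Sum>i=1..j. g i * p0 (j - i)) + tau * qp j"
          using E2[of j] that d0 unfolding qp_tau cv_def by (simp add: algebra_simps)
        then have "y j = (\<Sum>i=1..j. g i * (lam * p0 (j - i))) / tau + qp j"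
          unfolding y_def using tau0 by (simp add: field_simps sum_distrib_left)
        then show ?thesis unfolding y_def by (simp add: sum_divide_distrib mult_ac)
      qed
      have "y j = (\<Sum>n=0..j. wr g (j - n) * qp n)"
        by (rule renewal[OF rec j]) simp
      also have "\<dots> = (\<Sum>n=0..j. ecoef g j n * qp n)"
        by (rule sum.cong[OF refl]) (simp add: ecoef_wr del: ecoef.simps)
      finally have "lam * p0 j = tau * (\<Sum>n=0..j. ecoef g j n * qp n)"
        unfolding y_def using tau0 by (simp add: field_simps)
      then show ?thesis unfolding cE_def d0
        by (simp add: of_real_sum del: ecoef.simps)
    qed
    define SKT where "SKT = (\<Sum>r=a..b-1. K r * T r)"
    define SE where "SE = (\<Sum>j=0..a-1. cE j * (\<Sum>r=a..b-1. complex_of_real (g (r - j)) * K r))"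
    define SJ where "SJ = (\<Sum>j=0..a-1. cE j * (x ^ b * (complex_of_real (g (b - j)) + Gt j)))"
    define ST where "ST = (\<Sum>m<b. T m * x ^ m)"
    define SH where "SH = (\<Sum>n=0..a-1. complex_of_real (pp n + d * qp n) * x ^ n)"
    define EPg where "EPg = (\<Sum>n=0..a-1. complex_of_real (qp n) * (x ^ b * complex_of_real (1 - d) *
        (\<Sum>j=n..a-1. complex_of_real (ecoef g j n) * Z j)))"
    define Num where "Num = (\<Sum>n=0..a-1. complex_of_real (pp n) * x ^ n) * (H - 1) * K b
       + (\<Sum>n=0..a-1. complex_of_real (qp n) *
          (x ^ n * (complex_of_real d * H - 1) * K b
          + x ^ b * complex_of_real (1 - d) * (\<Sum>j=n..a-1. complex_of_real (ecoef g j n) * Z j)))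
       + (\<Sum>n=a..b-1. complex_of_real (pp n + qp n) * (x ^ b * K n - x ^ n * K b))"
    have a1: "(\<Sum>r=a..b-1. K r * complex_of_real (Br r)) = complex_of_real tau * SKT + SE"
    proof -
      have "(\<Sum>r=a..b-1. K r * complex_of_real (Br r)) = (\<Sum>r=a..b-1. complex_of_real tau * (K r * T r)
          + (\<Sum>j=0..a-1. cE j * (complex_of_real (g (r - j)) * K r)))"
        by (rule sum.cong[OF refl]) (simp add: Br_c distrib_left sum_distrib_left mult_ac)
      also have "\<dots> = complex_of_real tau * SKT + (\<Sum>r=a..b-1. \<Sum>j=0..a-1. cE j * (complex_of_real (g (r - j)) * K r))"
        unfolding SKT_def by (simp add: sum.distrib sum_distrib_left)
      also have "(\<Sum>r=a..b-1. \<Sum>j=0..a-1. cE j * (complex_of_real (g (r - j)) * K r)) = SE"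
        unfolding SE_def sum_distrib_left by (rule sum.swap)
      finally show ?thesis .
    qed
    have Zs: "Z j = (\<Sum>i=a..b-1. complex_of_real (g (i - j)) * K i) + (complex_of_real (g (b - j)) + Gt j) * K b" for j
      unfolding Z_def split_ab(1) sum.insert[OF finite_atLeastAtMost split_ab(2)] by (simp add: distrib_right add_ac)
    have a2: "(\<Sum>j=0..a-1. cE j * (x ^ b * Z j)) = x ^ b * SE + K b * SJ"
    proof -
      have "(\<Sum>j=0..a-1. cE j * (x ^ b * Z j)) = (\<Sum>j=0..a-1. x ^ b * (cE j * (\<Sum>r=a..b-1. complex_of_real (g (r - j)) * K r))
          + K b * (cE j * (x ^ b * (complex_of_real (g (b - j)) + Gt j))))"
        by (rule sum.cong[OF refl]) (simp only: Zs algebra_simps)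
      also have "\<dots> = x ^ b * SE + K b * SJ"
        unfolding SE_def SJ_def by (simp only: sum.distrib sum_distrib_left)
      finally show ?thesis .
    qed
    have S1: "complex_of_real tau * (Pp * (x ^ b - K b)) = complex_of_real tau * (x ^ b * SKT + K b * (H * SH) - K b * ST)
        + (x ^ b * SE + K b * SJ)"
    proof -
      have "complex_of_real tau * (Pp * (x ^ b - K b)) = x ^ b * (complex_of_real tau * Pp) - K b * (complex_of_real tau * Pp)"
        by (simp add: algebra_simps)
      also have "\<dots> = x ^ b * (complex_of_real tau * SKT + SE) + K b * (x ^ b * PB) - K b * (complex_of_real tau * Pp)"
        unfolding tauPp a1 by (simp add: algebra_simps)
      also have "\<dots> = x ^ b * (complex_of_real tau * SKT + SE) + K b * (complex_of_real tau * Qp) - K b * (complex_of_real tau * ST) + K b * SJ"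
        unfolding xPB ST_def[symmetric] SJ_def[symmetric] by (simp add: algebra_simps)
      also have "\<dots> = complex_of_real tau * (x ^ b * SKT + K b * (H * SH) - K b * ST) + (x ^ b * SE + K b * SJ)"
        unfolding tauQp SH_def[symmetric] by (simp add: algebra_simps)
      finally show ?thesis .
    qed
    have S2: "(\<Sum>j=0..a-1. cE j * (x ^ b * Z j)) = complex_of_real tau * EPg"
    proof -
      have "(\<Sum>j=0..a-1. cE j * (x ^ b * Z j)) = (\<Sum>j=0..a-1. complex_of_real tau *
          (\<Sum>n=0..j. complex_of_real (qp n) * (x ^ b * complex_of_real (1 - d) * (complex_of_real (ecoef g j n) * Z j))))"
      proof (rule sum.cong[OF refl])
        fix j assume "j \<in> {0..a-1}"
        then have jle: "j \<le> a - 1" by simp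
        show "cE j * (x ^ b * Z j) = complex_of_real tau *
          (\<Sum>n=0..j. complex_of_real (qp n) * (x ^ b * complex_of_real (1 - d) * (complex_of_real (ecoef g j n) * Z j)))"
          unfolding cE_e[OF jle] sum_distrib_left sum_distrib_right
          by (rule sum.cong[OF refl]) (simp only: mult_ac)
      qed
      also have "\<dots> = complex_of_real tau * (\<Sum>j=0..a-1. \<Sum>n=0..j. complex_of_real (qp n) * (x ^ b * complex_of_real (1 - d) * (complex_of_real (ecoef g j n) * Z j)))"
        by (simp only: sum_distrib_left)
      also have "(\<Sum>j=0..a-1. \<Sum>n=0..j. complex_of_real (qp n) * (x ^ b * complex_of_real (1 - d) * (complex_of_real (ecoef g j n) * Z j)))
          = (\<Sum>n=0..a-1. \<Sum>j=n..a-1. complex_of_real (qp n) * (x ^ b * complex_of_real (1 - d) * (complex_of_real (ecoef g j n) * Z j)))"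
        by (rule tri_swap[symmetric])
      also have "complex_of_real tau * (\<Sum>n=0..a-1. \<Sum>j=n..a-1. complex_of_real (qp n) * (x ^ b * complex_of_real (1 - d) * (complex_of_real (ecoef g j n) * Z j)))
          = complex_of_real tau * EPg"
        unfolding EPg_def by (simp only: sum_distrib_left)
      finally show ?thesis .
    qed
    have S3: "x ^ b * SKT + K b * (H * SH) - K b * ST + EPg = Num"
    proof -
      have e: "{..<b} = {0..a-1} \<union> {a..b-1}" using ab by auto
      have STs: "ST = (\<Sum>m=0..a-1. T m * x ^ m) + (\<Sum>m=a..b-1. T m * x ^ m)"
        unfolding ST_def e by (rule sum.union_disjoint) (use ab in auto)
      have i1: "(\<Sum>n=0..a-1. complex_of_real (qp n) * (x ^ n * (complex_of_real d * H - 1) * K b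
          + x ^ b * complex_of_real (1 - d) * (\<Sum>j=n..a-1. complex_of_real (ecoef g j n) * Z j)))
          = (\<Sum>n=0..a-1. complex_of_real (qp n) * (x ^ n * (complex_of_real d * H - 1) * K b)) + EPg"
        unfolding EPg_def by (simp only: distrib_left sum.distrib)
      have i2: "(\<Sum>n=a..b-1. complex_of_real (pp n + qp n) * (x ^ b * K n - x ^ n * K b))
          = x ^ b * SKT - K b * (\<Sum>m=a..b-1. T m * x ^ m)"
      proof -
        have "(\<Sum>n=a..b-1. complex_of_real (pp n + qp n) * (x ^ b * K n - x ^ n * K b))
            = (\<Sum>n=a..b-1. x ^ b * (K n * T n) - K b * (T n * x ^ n))"
          by (rule sum.cong[OF refl]) (simp only: T_def algebra_simps)
        also have "\<dots> = x ^ b * SKT - K b * (\<Sum>m=a..b-1. T m * x ^ m)"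
          unfolding SKT_def by (simp only: sum_subtractf sum_distrib_left)
        finally show ?thesis .
      qed
      have i3: "K b * (H * SH) - K b * (\<Sum>m=0..a-1. T m * x ^ m)
          = (\<Sum>n=0..a-1. complex_of_real (pp n) * x ^ n) * (H - 1) * K b
          + (\<Sum>n=0..a-1. complex_of_real (qp n) * (x ^ n * (complex_of_real d * H - 1) * K b))"
      proof -
        have "K b * (H * SH) - K b * (\<Sum>m=0..a-1. T m * x ^ m)
            = (\<Sum>n=0..a-1. K b * (H * (complex_of_real (pp n + d * qp n) * x ^ n)) - K b * (T n * x ^ n))"
          unfolding SH_def by (simp only: sum_subtractf sum_distrib_left)
        also have "\<dots> = (\<Sum>n=0..a-1. complex_of_real (pp n) * x ^ n * (H - 1) * K b
            + complex_of_real (qp n) * (x ^ n * (complex_of_real d * H - 1) * K b))"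
          by (rule sum.cong[OF refl]) (simp add: T_def algebra_simps)
        also have "\<dots> = (\<Sum>n=0..a-1. complex_of_real (pp n) * x ^ n) * (H - 1) * K b
            + (\<Sum>n=0..a-1. complex_of_real (qp n) * (x ^ n * (complex_of_real d * H - 1) * K b))"
          by (simp only: sum.distrib sum_distrib_right)
        finally show ?thesis .
      qed
      have "Num = (\<Sum>n=0..a-1. complex_of_real (pp n) * x ^ n) * (H - 1) * K b
          + ((\<Sum>n=0..a-1. complex_of_real (qp n) * (x ^ n * (complex_of_real d * H - 1) * K b)) + EPg)
          + (x ^ b * SKT - K b * (\<Sum>m=a..b-1. T m * x ^ m))"
        unfolding Num_def by (simp only: i1 i2)
      moreover have gen: "\<And>X1 X2 (Kb::complex) S1 S2 X5 P Q N. N = P + (Q + X5) + (X1 - Kb * S2) \<Longrightarrow>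
          X2 - Kb * S1 = P + Q \<Longrightarrow> X1 + X2 - Kb * (S1 + S2) + X5 = N"
        by (simp add: algebra_simps)
      ultimately show ?thesis unfolding STs using i3 by blast
    qed
    have "complex_of_real tau * (Pp * (x ^ b - K b)) = complex_of_real tau * Num"
      unfolding S1 a2[symmetric] S2 S3[symmetric] by (simp add: algebra_simps)
    then have "Pp * (x ^ b - K b) = Num" using tau0 by simp
    then have fin: "Pp = Num / (x ^ b - K b)" using xden unfolding K_def by (simp add: eq_divide_eq)
    show ?thesis unfolding pp_def[symmetric] qp_def[symmetric]
      using fin unfolding Pp_def pgf_def Num_def K_def H_def Z_def Gt_def .
  qed
qed


end
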